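(* Let $E$ be a finite set of events, each with a timestamp $\tau(e)\in\mathbb{R}$, let $t_w>0$ be a real number and $n\ge 1$ an integer. Let $\mathcal{I}\subseteq 2^E$ consist of all $T\subseteq E$ such that for every $t\in\mathbb{R}$, $|\{e\in T:\tau(e)\in[t,t+t_w)\}|\le n$. Then $(E,\mathcal{I})$ is a $p$-system with $p=2$.
   Context: An independence family $\mathcal{I}\subseteq 2^X$ is a downward-closed family of subsets of $X$. For $Y\subseteq X$, a base of $Y$ is a maximal (with respect to inclusion) set $J\subseteq Y$ with $J\in\mathcal{I}$, i.e. $J\in\mathcal{I}$ and $J\cup\{e\}\notin\mathcal{I}$ for every $e\in Y\setminus J$. $(X,\mathcal{I})$ is a $p$-system if for every $Y\subseteq X$, the maximum cardinality of a base of $Y$ is at most $p$ times the minimum cardinality of a base of $Y$. *)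

theory Defs
  imports Complex_Main
begin

definition indep_family :: "'a set \<Rightarrow> 'a set set \<Rightarrow> bool" where
  "indep_family X I \<longleftrightarrow> I \<subseteq> Pow X \<and> (\<forall>A\<in>I. \<forall>B. B \<subseteq> A \<longrightarrow> B \<in> I)"

definition is_base :: "'a set set \<Rightarrow> 'a set \<Rightarrow> 'a set \<Rightarrow> bool" where
  "is_base I Y J \<longleftrightarrow> J \<subseteq> Y \<and> J \<in> I \<and> (\<forall>e \<in> Y - J. insert e J \<notin> I)"

definition p_system :: "'a set \<Rightarrow> 'a set set \<Rightarrow> nat \<Rightarrow> bool" where
  "p_system X I p \<longleftrightarrow> finite X \<and> indep_family X I \<and>
     (\<forall>Y \<subseteq> X. Max (card ` {J. is_base I Y J}) \<le> p * Min (card ` {J. is_base I Y J}))"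

end

theory Submission
  imports Defs
begin

lemma card3_le:
  assumes "finite C" "A \<subseteq> C" "B \<subseteq> C" "D \<subseteq> C"
    "A \<inter> B = {}" "A \<inter> D = {}" "B \<inter> D = {}"
  shows "card A + card B + card D \<le> card C"
proof -
  have f: "finite A" "finite B" "finite D" using assms finite_subset by blast+
  have "card (A \<union> B \<union> D) = card A + card B + card D"
    using f assms by (simp add: card_Un_disjoint Int_Un_distrib2)
  moreover have "card (A \<union> B \<union> D) \<le> card C" using assms by (intro card_mono) auto
  ultimately show ?thesis by simp
qed

lemma card2_le:
  assumes "finite C" "A \<subseteq> C" "B \<subseteq> C" "A \<inter> B = {}"
  shows "card A + card B \<le> card C"
  using card3_le[of C A B "{}"] assms by simp

lemma key:
  fixes \<tau> :: "'a \<Rightarrow> real"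
  assumes finK: "finite K" and finJ: "finite J" and tw: "tw > 0"
    and Kb: "\<forall>t. card {e\<in>K. t \<le> \<tau> e \<and> \<tau> e < t+tw} \<le> n"
    and blk: "\<forall>e\<in>K-J. \<exists>t. t \<le> \<tau> e \<and> \<tau> e < t+tw \<and> n \<le> card {y\<in>J. t \<le> \<tau> y \<and> \<tau> y < t+tw}"
  shows "card {e\<in>K. a \<le> \<tau> e} \<le> card {e\<in>J. a \<le> \<tau> e} + card {e\<in>J. a - tw < \<tau> e}"
proof (induction "card {e\<in>K. a \<le> \<tau> e}" arbitrary: a rule: less_induct)
  case less
  let ?B = "{e\<in>K-J. a \<le> \<tau> e}"
  show ?case
  proof (cases "?B = {}")
    case True
    then have "{e\<in>K. a \<le> \<tau> e} \<subseteq> {e\<in>J. a \<le> \<tau> e}" by blast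
    then have "card {e\<in>K. a \<le> \<tau> e} \<le> card {e\<in>J. a \<le> \<tau> e}"
      using finJ by (intro card_mono) auto
    then show ?thesis by linarith
  next
    case False
    define x where "x = Min (\<tau> ` ?B)"
    have finB: "finite ?B" using finK by auto
    have "x \<in> \<tau> ` ?B" unfolding x_def using finB False by (intro Min_in) auto
    then obtain e0 where e0: "e0 \<in> ?B" "\<tau> e0 = x" by auto
    have xmin: "\<forall>e\<in>?B. x \<le> \<tau> e" unfolding x_def using finB by auto
    have ax: "a \<le> x" using e0 by auto
    obtain t where t: "t \<le> x" "x < t+tw" "n \<le> card {y\<in>J. t \<le> \<tau> y \<and> \<tau> y < t+tw}"
      using blk e0 by force
    define a' where "a' = x + tw"
    have sub: "{e\<in>K. a' \<le> \<tau> e} \<subset> {e\<in>K. a \<le> \<tau> e}"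
      using e0 ax tw unfolding a'_def by force
    have IH: "card {e\<in>K. a' \<le> \<tau> e} \<le> card {e\<in>J. a' \<le> \<tau> e} + card {e\<in>J. a' - tw < \<tau> e}"
      using less psubset_card_mono[OF _ sub] finK by auto
    have aeq: "a' - tw = x" unfolding a'_def by simp
    define P1 where "P1 = {e\<in>J. a \<le> \<tau> e \<and> \<tau> e < x}"
    define P2 where "P2 = {e\<in>J. x < \<tau> e \<and> \<tau> e < a'}"
    define P3 where "P3 = {e\<in>J. a' \<le> \<tau> e}"
    define Q1 where "Q1 = {e\<in>J. x - tw < \<tau> e \<and> \<tau> e \<le> x}"
    define Q2 where "Q2 = {e\<in>J. x < \<tau> e}"
    have h1: "card P1 + card P2 + card P3 \<le> card {e\<in>J. a \<le> \<tau> e}"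
      proof -
      have xa': "x < a'" using tw unfolding a'_def by simp
      show ?thesis unfolding P1_def P2_def P3_def
        by (rule card3_le) (use finJ ax xa' in \<open>auto\<close>)
    qed
    have h2: "card Q1 + card Q2 \<le> card {e\<in>J. a - tw < \<tau> e}"
      unfolding Q1_def Q2_def using finJ ax tw by (intro card2_le) auto
    have "{y\<in>J. t \<le> \<tau> y \<and> \<tau> y < t+tw} \<subseteq> Q1 \<union> P2"
      unfolding Q1_def P2_def a'_def using t by auto
    then have "card {y\<in>J. t \<le> \<tau> y \<and> \<tau> y < t+tw} \<le> card (Q1 \<union> P2)"
      using finJ unfolding Q1_def P2_def by (intro card_mono) auto
    also have "\<dots> \<le> card Q1 + card P2" by (rule card_Un_le)
    finally have h3: "n \<le> card Q1 + card P2" using t by linarith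
    define S1 where "S1 = {e\<in>K. a \<le> \<tau> e \<and> \<tau> e < x}"
    define S2 where "S2 = {e\<in>K. x \<le> \<tau> e \<and> \<tau> e < x + tw}"
    define S3 where "S3 = {e\<in>K. a' \<le> \<tau> e}"
    have "S1 \<subseteq> P1" unfolding S1_def P1_def using xmin by force
    then have c1: "card S1 \<le> card P1" using finJ unfolding P1_def by (intro card_mono) auto
    have c2: "card S2 \<le> n" unfolding S2_def by (rule spec[OF Kb])
    have c3: "card S3 \<le> card P3 + card Q2"
      using IH aeq unfolding S3_def P3_def Q2_def by simp
    have "{e\<in>K. a \<le> \<tau> e} = S1 \<union> S2 \<union> S3"
      unfolding S1_def S2_def S3_def a'_def using ax tw by auto
    then have "card {e\<in>K. a \<le> \<tau> e} = card (S1 \<union> S2 \<union> S3)" by simp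
    also have "\<dots> \<le> card (S1 \<union> S2) + card S3" by (rule card_Un_le)
    also have "\<dots> \<le> card S1 + card S2 + card S3" using card_Un_le[of S1 S2] by linarith
    finally have "card {e\<in>K. a \<le> \<tau> e} \<le> card S1 + card S2 + card S3" .
    then show ?thesis using h1 h2 h3 c1 c2 c3 by linarith
  qed
qed

theorem theorem2:
  fixes E :: "'a set" and \<tau> :: "'a \<Rightarrow> real" and t_w :: real and n :: nat
  assumes "finite E" and "t_w > 0" and "n \<ge> 1"
  defines "\<I> \<equiv> {T. T \<subseteq> E \<and> (\<forall>t::real. card {e \<in> T. t \<le> \<tau> e \<and> \<tau> e < t + t_w} \<le> n)}"
  shows "p_system E \<I> 2"
proof -
  note finE = assms(1)
  have downI: "B \<in> \<I>" if "A \<in> \<I>" "B \<subseteq> A" for A B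
  proof -
    have "card {e \<in> B. t \<le> \<tau> e \<and> \<tau> e < t + t_w} \<le> n" for t
    proof -
      have "card {e \<in> B. t \<le> \<tau> e \<and> \<tau> e < t + t_w} \<le> card {e \<in> A. t \<le> \<tau> e \<and> \<tau> e < t + t_w}"
        proof (rule card_mono)
        have "A \<subseteq> E" using that unfolding \<I>_def by auto
        then have "finite A" using finE by (rule finite_subset)
        then show "finite {e \<in> A. t \<le> \<tau> e \<and> \<tau> e < t + t_w}" by simp
      qed (use that in auto)
      moreover have "card {e \<in> A. t \<le> \<tau> e \<and> \<tau> e < t + t_w} \<le> n"
        proof -
        have "A \<in> {T. T \<subseteq> E \<and> (\<forall>t::real. card {e \<in> T. t \<le> \<tau> e \<and> \<tau> e < t + t_w} \<le> n)}"
          using that(1) unfolding \<I>_def .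
        then have "\<forall>t::real. card {e \<in> A. t \<le> \<tau> e \<and> \<tau> e < t + t_w} \<le> n" by simp
        then show ?thesis by (rule spec)
      qed
      ultimately show ?thesis by linarith
    qed
    then show ?thesis using that unfolding \<I>_def by auto
  qed
  have fam: "indep_family E \<I>" unfolding indep_family_def
  proof (intro conjI ballI allI impI)
    show "\<I> \<subseteq> Pow E" unfolding \<I>_def by blast
  next
    fix A B assume "A \<in> \<I>" "B \<subseteq> A"
    then show "B \<in> \<I>" by (rule downI)
  qed
  have main: "Max (card ` {J. is_base \<I> Y J}) \<le> 2 * Min (card ` {J. is_base \<I> Y J})"
    if Y: "Y \<subseteq> E" for Y
  proof -
    let ?Bs = "{J. is_base \<I> Y J}"
    have finBs: "finite ?Bs"
      by (rule finite_subset[of _ "Pow E"]) (use Y finE in \<open>auto simp: is_base_def\<close>)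
    let ?C = "{J. J \<subseteq> Y \<and> J \<in> \<I>}"
    have finC: "finite ?C" by (rule finite_subset[of _ "Pow E"]) (use Y finE in auto)
    have "{} \<in> ?C" unfolding \<I>_def by auto
    then have "Max (card ` ?C) \<in> card ` ?C" using finC by (intro Max_in) auto
    then obtain J0 where J0a: "J0 \<in> ?C" "card J0 = Max (card ` ?C)" by auto
    have J0: "J0 \<in> ?C" "\<forall>J\<in>?C. card J \<le> card J0"
      using J0a finC by auto
    have "is_base \<I> Y J0"
      unfolding is_base_def
    proof (intro conjI ballI)
      show "J0 \<subseteq> Y" "J0 \<in> \<I>" using J0 by auto
      fix e assume e: "e \<in> Y - J0"
      show "insert e J0 \<notin> \<I>"
      proof
        assume "insert e J0 \<in> \<I>"
        then have "card (insert e J0) \<le> card J0" using J0 e by auto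
        moreover have "J0 \<subseteq> E" using J0(1) Y by blast
        then have "finite J0" using finE by (rule finite_subset)
        ultimately show False using e by simp
      qed
    qed
    then have neBs: "?Bs \<noteq> {}" by auto
    have "Max (card ` ?Bs) \<in> card ` ?Bs" using finBs neBs by (intro Max_in) auto
    then obtain K where K: "is_base \<I> Y K" "card K = Max (card ` ?Bs)" by auto
    have "Min (card ` ?Bs) \<in> card ` ?Bs" using finBs neBs by (intro Min_in) auto
    then obtain J where J: "is_base \<I> Y J" "card J = Min (card ` ?Bs)" by auto
    have KE: "K \<subseteq> E" "K \<in> \<I>" and JE: "J \<subseteq> E" "J \<in> \<I>" using K J Y by (auto simp: is_base_def)
    have finK: "finite K" and finJ: "finite J" using KE JE finE finite_subset by auto
    have Kb: "\<forall>t. card {e\<in>K. t \<le> \<tau> e \<and> \<tau> e < t+t_w} \<le> n" using KE unfolding \<I>_def by auto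
    have blk: "\<forall>e\<in>K-J. \<exists>t. t \<le> \<tau> e \<and> \<tau> e < t+t_w \<and> n \<le> card {y\<in>J. t \<le> \<tau> y \<and> \<tau> y < t+t_w}"
    proof
      fix e assume e: "e \<in> K - J"
      then have eY: "e \<in> Y - J" using K by (auto simp: is_base_def)
      then have "insert e J \<notin> \<I>" using J by (auto simp: is_base_def)
      moreover have "insert e J \<subseteq> E" using JE eY Y by auto
      ultimately obtain t where t: "\<not> card {x \<in> insert e J. t \<le> \<tau> x \<and> \<tau> x < t + t_w} \<le> n"
        unfolding \<I>_def by auto
      have Jt: "card {x \<in> J. t \<le> \<tau> x \<and> \<tau> x < t + t_w} \<le> n" using JE unfolding \<I>_def by auto
      show "\<exists>t. t \<le> \<tau> e \<and> \<tau> e < t+t_w \<and> n \<le> card {y\<in>J. t \<le> \<tau> y \<and> \<tau> y < t+t_w}"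
      proof (cases "t \<le> \<tau> e \<and> \<tau> e < t + t_w")
        case True
        then have "{x \<in> insert e J. t \<le> \<tau> x \<and> \<tau> x < t + t_w} = insert e {x \<in> J. t \<le> \<tau> x \<and> \<tau> x < t + t_w}"
          by auto
        then have "card {x \<in> insert e J. t \<le> \<tau> x \<and> \<tau> x < t + t_w} \<le> Suc (card {x \<in> J. t \<le> \<tau> x \<and> \<tau> x < t + t_w})"
          using finJ by (simp add: card_insert_le_m1 card_insert_if)
        then show ?thesis using True t by auto
      next
        case False
        then have "{x \<in> insert e J. t \<le> \<tau> x \<and> \<tau> x < t + t_w} = {x \<in> J. t \<le> \<tau> x \<and> \<tau> x < t + t_w}"
          by auto
        then show ?thesis using t Jt by simp
      qed
    qed
    define a where "a = Min (insert 0 (\<tau> ` E))"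
    have aa: "\<forall>e\<in>E. a \<le> \<tau> e" unfolding a_def using finE by auto
    have "card {e\<in>K. a \<le> \<tau> e} \<le> card {e\<in>J. a \<le> \<tau> e} + card {e\<in>J. a - t_w < \<tau> e}"
      by (rule key[OF finK finJ assms(2) Kb blk])
    moreover have "{e\<in>K. a \<le> \<tau> e} = K" using aa KE by auto
    moreover have "{e\<in>J. a \<le> \<tau> e} = J" using aa JE by auto
    moreover have "{e\<in>J. a - t_w < \<tau> e} = J" using aa JE assms(2) by force
    ultimately have "card K \<le> 2 * card J" by simp
    then show ?thesis using K J by simp
  qed
  show ?thesis unfolding p_system_def using finE fam main by blast
qed

end
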